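(* Let $B_i\colon\mathbb{R}^d\to\mathbb{R}^{d_i}$ be surjective linear maps, $c_i>0$, $\theta_i>0$ with $\sum_i\theta_i=1$, and suppose $\mathrm{BL}(\mathbf{B},\mathbf{c})<\infty$. Let $f\colon\mathbb{R}^d\to[0,\infty)$ be bounded, compactly supported and not almost everywhere zero, and put $f_i:=(B_i)_*f$. For $0<p<1$ let $p_i=p_i(p)$ be defined by $c_i(1-\frac1p)=\theta_i(1-\frac1{p_i})$, and set $$\Lambda(p):=\frac{\|f\|_{L^p(\mathbb{R}^d)}}{\mathrm{BL}(\mathbf{B},\mathbf{c})^{\frac1p-1}\prod_{i=1}^k\|f_i\|_{L^{p_i}(\mathbb{R}^{d_i})}^{\theta_i}}.$$ Then $$p^2\frac{d}{dp}\log\Lambda(p)=\log\mathrm{BL}(\mathbf{B},\mathbf{c})-H\!\left(\frac{f^p}{\|f\|_p^p}\right)+\sum_{i=1}^kc_iH\!\left(\frac{f_i^{p_i}}{\|f_i\|_{p_i}^{p_i}}\right).$$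
   Context: $\mathrm{BL}(\mathbf{B},\mathbf{c})$ is the best constant in $\int_{\mathbb{R}^d}\prod_if_i(B_ix)^{c_i}dx\le\mathrm{BL}\prod_i(\int f_i)^{c_i}$ over non-negative integrable $f_i$. The pushforward $B_*f$ is defined by $\int B_*f\cdot F=\int f\cdot F\circ B$ for all measurable $F\ge0$. For a probability density $g$, $H(g):=\int g\log\frac1g$ (continuous entropy). *)

theory Defs
  imports "HOL-Analysis.Analysis"
begin

text \<open>Euclidean space R^n, modelled as extensional functions on the index set {..<n}
  with the n-fold product of Lebesgue (Borel) measure.\<close>
definition Rn :: "nat \<Rightarrow> (nat \<Rightarrow> real) measure" where
  "Rn n = (\<Pi>\<^sub>M j\<in>{..<n}. (lborel :: real measure))"

definition lin_map :: "(nat \<Rightarrow> nat \<Rightarrow> real) \<Rightarrow> nat \<Rightarrow> nat \<Rightarrow> (nat \<Rightarrow> real) \<Rightarrow> (nat \<Rightarrow> real)" where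
  "lin_map M m n x = (\<lambda>j\<in>{..<m}. \<Sum>l<n. M j l * x l)"

definition BL :: "nat \<Rightarrow> nat \<Rightarrow> (nat \<Rightarrow> nat) \<Rightarrow> (nat \<Rightarrow> (nat \<Rightarrow> real) \<Rightarrow> (nat \<Rightarrow> real))
                  \<Rightarrow> (nat \<Rightarrow> real) \<Rightarrow> ennreal" where
  "BL d k dd B c = Inf {C. \<forall>g :: nat \<Rightarrow> (nat \<Rightarrow> real) \<Rightarrow> real.
      (\<forall>i<k. integrable (Rn (dd i)) (g i) \<and> (\<forall>y\<in>space (Rn (dd i)). 0 \<le> g i y)) \<longrightarrow>
      (\<integral>\<^sup>+ x. ennreal (\<Prod>i<k. g i (B i x) powr c i) \<partial>Rn d)
        \<le> C * ennreal (\<Prod>i<k. (\<integral> y. g i y \<partial>Rn (dd i)) powr c i)}"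

definition is_pushforward :: "(nat \<Rightarrow> real) measure \<Rightarrow> (nat \<Rightarrow> real) measure
     \<Rightarrow> ((nat \<Rightarrow> real) \<Rightarrow> (nat \<Rightarrow> real)) \<Rightarrow> ((nat \<Rightarrow> real) \<Rightarrow> real) \<Rightarrow> ((nat \<Rightarrow> real) \<Rightarrow> real) \<Rightarrow> bool" where
  "is_pushforward M N B f g \<longleftrightarrow>
     g \<in> borel_measurable N \<and> (\<forall>y\<in>space N. 0 \<le> g y) \<and>
     (\<forall>F \<in> borel_measurable N.
        (\<integral>\<^sup>+ y. ennreal (g y) * F y \<partial>N) = (\<integral>\<^sup>+ x. ennreal (f x) * F (B x) \<partial>M))"

definition Lp_norm :: "'a measure \<Rightarrow> real \<Rightarrow> ('a \<Rightarrow> real) \<Rightarrow> real" where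
  "Lp_norm M p f = (\<integral> x. \<bar>f x\<bar> powr p \<partial>M) powr (1 / p)"

definition cont_entropy :: "'a measure \<Rightarrow> ('a \<Rightarrow> real) \<Rightarrow> real" where
  "cont_entropy M g = (\<integral> x. g x * ln (1 / g x) \<partial>M)"

end

theory Submission
  imports Defs
begin


lemma powr_ln_bound:
  fixes y t a b :: real
  assumes y: "0 \<le> y" and a: "0 < a" "a \<le> t" and b: "t \<le> b" "b < 1"
  shows "\<bar>y powr t * ln y\<bar> \<le> 1 / a + y / (1 - b)"
proof (cases "y = 0")
  case True thus ?thesis using a b by simp
next
  case False
  hence yp: "0 < y" using y by simp
  show ?thesis
  proof (cases "y \<le> 1")
    case True
    have ln0: "ln y \<le> 0" using True yp by simp
    have "y powr t \<le> y powr a" using True yp a by (simp add: powr_mono')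
    have "ln (1 / y powr a) \<le> 1 / y powr a - 1" using yp by (intro ln_le_minus_one) simp
    hence "- a * ln y \<le> 1 / y powr a - 1" using yp by (simp add: ln_div ln_powr)
    hence "y powr a * (- a * ln y) \<le> y powr a * (1 / y powr a - 1)"
      by (intro mult_left_mono) auto
    moreover have "y powr a * (1 / y powr a - 1) = 1 - y powr a" using yp by (simp add: field_simps)
    moreover have "a * (y powr a * (- ln y)) = y powr a * (- a * ln y)" by simp
    ultimately have "a * (y powr a * (- ln y)) \<le> 1 - y powr a" by linarith
    hence "a * (y powr a * (- ln y)) \<le> 1" by (smt (verit) powr_ge_zero)
    hence h1: "y powr a * (- ln y) \<le> 1 / a" using a by (simp add: field_simps mult.commute)
    have "y powr t * ln y \<le> 0" using ln0 by (simp add: mult_nonneg_nonpos)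
    hence "\<bar>y powr t * ln y\<bar> = y powr t * (- ln y)" by (simp only: abs_of_nonpos mult_minus_right)
    also have "\<dots> \<le> y powr a * (- ln y)" using \<open>y powr t \<le> y powr a\<close> ln0 by (intro mult_right_mono) auto
    also have "\<dots> \<le> 1 / a" by (fact h1)
    finally show ?thesis using y b by (smt (verit) divide_nonneg_pos)
  next
    case False
    hence y1: "1 < y" by simp
    have ln0: "0 \<le> ln y" using y1 by simp
    have "y powr t \<le> y powr b" using y1 b by (simp add: powr_mono)
    have "ln (y powr (1 - b)) \<le> y powr (1 - b) - 1" using yp by (intro ln_le_minus_one) simp
    hence "(1 - b) * ln y \<le> y powr (1 - b)" using yp by (simp add: ln_powr)
    hence "y powr b * ((1 - b) * ln y) \<le> y powr b * y powr (1 - b)"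
      by (intro mult_left_mono) auto
    also have "\<dots> = y" using yp by (simp add: powr_add[symmetric])
    finally have h1: "y powr b * ln y \<le> y / (1 - b)" using b by (simp add: field_simps)
    have "\<bar>y powr t * ln y\<bar> = y powr t * ln y" using ln0 by simp
    also have "\<dots> \<le> y powr b * ln y" using \<open>y powr t \<le> y powr b\<close> ln0 by (intro mult_right_mono) auto
    also have "\<dots> \<le> y / (1 - b)" by (fact h1)
    finally show ?thesis using a by (smt (verit) divide_nonneg_pos)
  qed
qed

lemma powr_diffq_bound:
  fixes y r h a b :: real
  assumes y: "0 \<le> y" and a: "0 < a" "a \<le> r" "a \<le> r + h" and b: "r \<le> b" "r + h \<le> b" "b < 1"
    and h: "h \<noteq> 0"
  shows "\<bar>(y powr (r + h) - y powr r) / h\<bar> \<le> 1 / a + y / (1 - b)"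
proof (cases "y = 0")
  case True thus ?thesis using a b by simp
next
  case False
  hence yp: "0 < y" using y by simp
  have der: "\<And>t. DERIV (\<lambda>t. y powr t) t :> y powr t * ln y"
    using yp by (auto intro!: derivative_eq_intros)
  show ?thesis
  proof (cases "h > 0")
    case True
    obtain z where z: "r < z" "z < r + h" "y powr (r + h) - y powr r = (r + h - r) * (y powr z * ln y)"
      using MVT2[of r "r + h" "\<lambda>t. y powr t" "\<lambda>t. y powr t * ln y"] der True by auto
    have "(y powr (r + h) - y powr r) / h = y powr z * ln y" using z(3) True by simp
    thus ?thesis using powr_ln_bound[OF y a(1), of z b] z a b by simp
  next
    case False
    hence hn: "h < 0" using h by simp
    obtain z where z: "r + h < z" "z < r" "y powr r - y powr (r + h) = (r - (r + h)) * (y powr z * ln y)"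
      using MVT2[of "r + h" r "\<lambda>t. y powr t" "\<lambda>t. y powr t * ln y"] der hn by auto
    have "(y powr (r + h) - y powr r) / h = y powr z * ln y" using z(3) hn by (simp add: field_simps)
    thus ?thesis using powr_ln_bound[OF y a(1), of z b] z a b by simp
  qed
qed

lemma integrable_powr_small:
  fixes M :: "'a measure" and g :: "'a \<Rightarrow> real"
  assumes gm[measurable]: "g \<in> borel_measurable M" and gnn: "\<And>x. x \<in> space M \<Longrightarrow> 0 \<le> g x"
    and gi: "integrable M g" and S[measurable]: "S \<in> sets M" and Sfin: "emeasure M S < \<infinity>"
    and supp: "AE x in M. g x \<noteq> 0 \<longrightarrow> x \<in> S"
    and q: "0 < q" "q \<le> 1"
  shows "integrable M (\<lambda>x. g x powr q)"
proof (rule Bochner_Integration.integrable_bound[of _ "\<lambda>x. indicator S x + g x"])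
  show "integrable M (\<lambda>x. indicator S x + g x)" using gi Sfin by auto
  show "(\<lambda>x. g x powr q) \<in> borel_measurable M" by measurable
  show "AE x in M. norm (g x powr q) \<le> norm (indicator S x + g x)"
    using supp AE_space
  proof (eventually_elim)
    case (elim x)
    show ?case
    proof (cases "x \<in> space M")
      case True
      hence g0: "0 \<le> g x" by (rule gnn)
      show ?thesis
      proof (cases "g x = 0")
        case True thus ?thesis using g0 by (simp add: indicator_def)
      next
        case False
        hence xS: "x \<in> S" using elim by simp
        have "g x powr q \<le> 1 + g x"
        proof (cases "g x \<le> 1")
          case True
          hence "g x powr q \<le> 1" using g0 q powr_mono2[of q "g x" 1] by simp
          thus ?thesis using g0 by simp
        next
          case False
          hence "g x powr q \<le> g x powr 1" using q by (intro powr_mono) auto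
          thus ?thesis using False by simp
        qed
        thus ?thesis using xS g0 by (simp add: indicator_def)
      qed
    next
      case False
      thus ?thesis using elim by simp
    qed
  qed
qed

lemma deriv_int_powr:
  fixes M :: "'a measure" and g :: "'a \<Rightarrow> real"
  assumes gm[measurable]: "g \<in> borel_measurable M" and gnn: "\<And>x. x \<in> space M \<Longrightarrow> 0 \<le> g x"
    and gi: "integrable M g" and S[measurable]: "S \<in> sets M" and Sfin: "emeasure M S < \<infinity>"
    and supp: "AE x in M. g x \<noteq> 0 \<longrightarrow> x \<in> S"
    and r: "0 < r" "r < 1"
  shows "((\<lambda>q. \<integral>x. g x powr q \<partial>M) has_real_derivative (\<integral>x. g x powr r * ln (g x) \<partial>M)) (at r)"
proof -
  define a where "a = r / 2"
  define b where "b = (1 + r) / 2"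
  define \<delta> where "\<delta> = min (r / 2) ((1 - r) / 2)"
  have \<delta>: "0 < \<delta>" using r by (simp add: \<delta>_def)
  define w where "w = (\<lambda>x. 1 / a * indicator S x + g x / (1 - b))"
  have wi: "integrable M w" unfolding w_def using gi Sfin by auto
  define F where "F = (\<lambda>q. \<integral>x. g x powr q \<partial>M)"
  define D where "D = (\<integral>x. g x powr r * ln (g x) \<partial>M)"
  have intq: "integrable M (\<lambda>x. g x powr q)" if "0 < q" "q \<le> 1" for q
    by (rule integrable_powr_small[OF gm gnn gi S Sfin supp that])
  have bnd: "AE x in M. \<bar>(g x powr (r + h) - g x powr r) / h\<bar> \<le> w x"
    if h: "h \<noteq> 0" "\<bar>h\<bar> < \<delta>" for h
    using supp AE_space
  proof (eventually_elim)
    case (elim x)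
    have ab: "0 < a" "a \<le> r" "a \<le> r + h" "r \<le> b" "r + h \<le> b" "b < 1"
      using h r by (auto simp: a_def b_def \<delta>_def)
    show ?case
    proof (cases "x \<in> space M")
      case True
      hence g0: "0 \<le> g x" by (rule gnn)
      show ?thesis
      proof (cases "g x = 0")
        case True thus ?thesis using ab by (simp add: w_def indicator_def)
      next
        case False
        hence xS: "x \<in> S" using elim by simp
        show ?thesis using powr_diffq_bound[OF g0 ab h(1)] xS by (simp add: w_def)
      qed
    next
      case False
      thus ?thesis using elim by simp
    qed
  qed
  have "((\<lambda>h. (F (r + h) - F r) / h) \<longlongrightarrow> D) (at 0)"
    unfolding tendsto_at_iff_sequentially[where s=UNIV, simplified]
  proof (intro allI impI)
    fix X :: "nat \<Rightarrow> real" assume X0: "\<forall>i. X i \<noteq> 0" and X: "X \<longlonglongrightarrow> 0"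
    obtain N where N: "\<And>n. n \<ge> N \<Longrightarrow> \<bar>X n\<bar> < \<delta>"
      using X \<delta> unfolding LIMSEQ_iff by (metis diff_zero real_norm_def)
    define Y where "Y = (\<lambda>n. X (n + N))"
    have Y0: "\<And>n. Y n \<noteq> 0" using X0 by (simp add: Y_def)
    have Yd: "\<And>n. \<bar>Y n\<bar> < \<delta>" using N by (simp add: Y_def)
    have Y: "Y \<longlonglongrightarrow> 0" using X unfolding Y_def by (rule LIMSEQ_ignore_initial_segment)
    define s where "s = (\<lambda>n x. (g x powr (r + Y n) - g x powr r) / Y n)"
    have lim: "(\<lambda>n. integral\<^sup>L M (s n)) \<longlonglongrightarrow> integral\<^sup>L M (\<lambda>x. g x powr r * ln (g x))"
    proof (rule integral_dominated_convergence[where w=w])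
      show "(\<lambda>x. g x powr r * ln (g x)) \<in> borel_measurable M" by measurable
      show "\<And>i. s i \<in> borel_measurable M" unfolding s_def by measurable
      show "integrable M w" by (fact wi)
      show "AE x in M. norm (s i x) \<le> w x" for i
        using bnd[OF Y0 Yd] by (simp add: s_def)
      show "AE x in M. (\<lambda>i. s i x) \<longlonglongrightarrow> g x powr r * ln (g x)"
      proof (rule AE_I2)
        fix x assume x: "x \<in> space M"
        show "(\<lambda>i. s i x) \<longlonglongrightarrow> g x powr r * ln (g x)"
        proof (cases "g x = 0")
          case True thus ?thesis by (simp add: s_def)
        next
          case False
          hence gp: "0 < g x" using gnn[OF x] by simp
          have "DERIV (\<lambda>t. g x powr t) r :> g x powr r * ln (g x)"
            using gp by (auto intro!: derivative_eq_intros)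
          hence "((\<lambda>h. (g x powr (r + h) - g x powr r) / h) \<longlongrightarrow> g x powr r * ln (g x)) (at 0)"
            unfolding DERIV_def .
          hence "((\<lambda>h. (g x powr (r + h) - g x powr r) / h) \<circ> Y) \<longlonglongrightarrow> g x powr r * ln (g x)"
            using Y Y0 unfolding tendsto_at_iff_sequentially[where s=UNIV, simplified] by blast
          thus ?thesis by (simp add: s_def comp_def)
        qed
      qed
    qed
    have "integral\<^sup>L M (s n) = (F (r + Y n) - F r) / Y n" for n
    proof -
      have q: "0 < r + Y n" "r + Y n \<le> 1" using Yd[of n] r by (auto simp: \<delta>_def)
      show ?thesis unfolding s_def F_def
        using intq[OF q] intq[of r] r by (simp add: integral_diff)
    qed
    hence "(\<lambda>n. (F (r + X (n + N)) - F r) / X (n + N)) \<longlonglongrightarrow> D"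
      using lim by (simp add: Y_def D_def)
    hence "(\<lambda>n. (F (r + X n) - F r) / X n) \<longlonglongrightarrow> D" by (rule LIMSEQ_offset)
    thus "((\<lambda>h. (F (r + h) - F r) / h) \<circ> X) \<longlonglongrightarrow> D" by (simp add: comp_def)
  qed
  thus ?thesis unfolding DERIV_def F_def D_def .
qed

lemma integrable_powr_ln:
  fixes M :: "'a measure" and g :: "'a \<Rightarrow> real"
  assumes gm[measurable]: "g \<in> borel_measurable M" and gnn: "\<And>x. x \<in> space M \<Longrightarrow> 0 \<le> g x"
    and gi: "integrable M g" and S[measurable]: "S \<in> sets M" and Sfin: "emeasure M S < \<infinity>"
    and supp: "AE x in M. g x \<noteq> 0 \<longrightarrow> x \<in> S"
    and r: "0 < r" "r < 1"
  shows "integrable M (\<lambda>x. g x powr r * ln (g x))"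
proof (rule Bochner_Integration.integrable_bound[of _ "\<lambda>x. 1 / r * indicator S x + g x / (1 - r)"])
  show "integrable M (\<lambda>x. 1 / r * indicator S x + g x / (1 - r))" using gi Sfin by auto
  show "(\<lambda>x. g x powr r * ln (g x)) \<in> borel_measurable M" by measurable
  show "AE x in M. norm (g x powr r * ln (g x)) \<le> norm (1 / r * indicator S x + g x / (1 - r))"
    using supp AE_space
  proof (eventually_elim)
    case (elim x)
    hence g0: "0 \<le> g x" using gnn by simp
    show ?case
    proof (cases "g x = 0")
      case True thus ?thesis by simp
    next
      case False
      hence xS: "x \<in> S" using elim by simp
      have "\<bar>g x powr r * ln (g x)\<bar> \<le> 1 / r + g x / (1 - r)"
        using powr_ln_bound[OF g0 r(1) order.refl order.refl r(2)] .
      also have "\<dots> \<le> \<bar>1 / r * indicator S x + g x / (1 - r)\<bar>" using xS g0 r by simp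
      finally show ?thesis by simp
    qed
  qed
qed

lemma Lp_int_pos:
  fixes M :: "'a measure" and g :: "'a \<Rightarrow> real"
  assumes gm[measurable]: "g \<in> borel_measurable M" and gnn: "\<And>x. x \<in> space M \<Longrightarrow> 0 \<le> g x"
    and gi: "integrable M g" and S[measurable]: "S \<in> sets M" and Sfin: "emeasure M S < \<infinity>"
    and supp: "AE x in M. g x \<noteq> 0 \<longrightarrow> x \<in> S" and nz: "\<not> (AE x in M. g x = 0)"
    and q: "0 < q" "q \<le> 1"
  shows "0 < (\<integral>x. g x powr q \<partial>M)"
proof -
  have int: "integrable M (\<lambda>x. g x powr q)" by (rule integrable_powr_small[OF gm gnn gi S Sfin supp q])
  have nn: "AE x in M. 0 \<le> g x powr q" by simp
  have "0 \<le> (\<integral>x. g x powr q \<partial>M)" by (rule integral_nonneg_AE[OF nn])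
  moreover have "(\<integral>x. g x powr q \<partial>M) \<noteq> 0"
  proof
    assume "(\<integral>x. g x powr q \<partial>M) = 0"
    hence "AE x in M. g x powr q = 0" using integral_nonneg_eq_0_iff_AE[OF int nn] by simp
    hence "AE x in M. g x = 0" by (rule AE_mp) (auto)
    thus False using nz by simp
  qed
  ultimately show ?thesis by linarith
qed

lemma Lp_norm_eq:
  fixes M :: "'a measure" and g :: "'a \<Rightarrow> real"
  assumes gnn: "\<And>x. x \<in> space M \<Longrightarrow> 0 \<le> g x"
  shows "Lp_norm M q g = (\<integral>x. g x powr q \<partial>M) powr (1 / q)"
proof -
  have "(\<integral>x. \<bar>g x\<bar> powr q \<partial>M) = (\<integral>x. g x powr q \<partial>M)"
    by (rule Bochner_Integration.integral_cong) (auto simp: gnn)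
  thus ?thesis unfolding Lp_norm_def by simp
qed

lemma deriv_ln_Lp:
  fixes M :: "'a measure" and g :: "'a \<Rightarrow> real"
  assumes gm[measurable]: "g \<in> borel_measurable M" and gnn: "\<And>x. x \<in> space M \<Longrightarrow> 0 \<le> g x"
    and gi: "integrable M g" and S[measurable]: "S \<in> sets M" and Sfin: "emeasure M S < \<infinity>"
    and supp: "AE x in M. g x \<noteq> 0 \<longrightarrow> x \<in> S" and nz: "\<not> (AE x in M. g x = 0)"
    and r: "0 < r" "r < 1"
  shows "((\<lambda>q. ln (Lp_norm M q g)) has_real_derivative
           (- cont_entropy M (\<lambda>x. g x powr r / Lp_norm M r g powr r) / r\<^sup>2)) (at r)"
proof -
  define I where "I = (\<lambda>q. \<integral>x. g x powr q \<partial>M)"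
  define I' where "I' = (\<integral>x. g x powr r * ln (g x) \<partial>M)"
  have Ipos: "0 < I q" if "0 < q" "q \<le> 1" for q
    unfolding I_def by (rule Lp_int_pos[OF gm gnn gi S Sfin supp nz that])
  have dI: "(I has_real_derivative I') (at r)"
    unfolding I_def I'_def by (rule deriv_int_powr[OF gm gnn gi S Sfin supp r])
  have d1: "((\<lambda>q. ln (I q) / q) has_real_derivative ((I' / I r) * r - ln (I r)) / r\<^sup>2) (at r)"
    using Ipos[of r] r dI by (auto intro!: derivative_eq_intros simp: power2_eq_square)
  have eq: "ln (Lp_norm M q g) = ln (I q) / q" if "q \<in> {0<..<1}" for q
  proof -
    have "0 < I q" using that by (intro Ipos) auto
    moreover have "Lp_norm M q g = I q powr (1/q)" unfolding I_def by (rule Lp_norm_eq[OF gnn])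
    ultimately show ?thesis by (simp add: ln_powr)
  qed
  have d2: "((\<lambda>q. ln (Lp_norm M q g)) has_real_derivative ((I' / I r) * r - ln (I r)) / r\<^sup>2) (at r)"
    by (rule has_field_derivative_transform_within_open[OF d1, of "{0<..<1}"]) (use r eq in auto)
  have Ir: "0 < I r" using Ipos[of r] r by simp
  have "Lp_norm M r g = I r powr (1/r)" unfolding I_def by (rule Lp_norm_eq[OF gnn])
  hence Lr: "Lp_norm M r g powr r = I r" using Ir r by (simp add: powr_powr)
  have int1: "integrable M (\<lambda>x. g x powr r)" by (rule integrable_powr_small[OF gm gnn gi S Sfin supp]) (use r in auto)
  have int2: "integrable M (\<lambda>x. g x powr r * ln (g x))" by (rule integrable_powr_ln[OF gm gnn gi S Sfin supp r])
  have pw: "g x powr r / I r * ln (1 / (g x powr r / I r)) = (ln (I r) / I r) * g x powr r - (r / I r) * (g x powr r * ln (g x))"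
    if "x \<in> space M" for x
  proof (cases "g x = 0")
    case True thus ?thesis by simp
  next
    case False
    hence gp: "0 < g x" using gnn[OF that] by simp
    have L: "ln (1 / (g x powr r / I r)) = ln (I r) - r * ln (g x)"
      using gp Ir by (simp add: ln_div ln_powr)
    show ?thesis unfolding L using Ir by (simp add: field_simps)
  qed
  have "cont_entropy M (\<lambda>x. g x powr r / Lp_norm M r g powr r)
      = (\<integral>x. (ln (I r) / I r) * g x powr r - (r / I r) * (g x powr r * ln (g x)) \<partial>M)"
    unfolding cont_entropy_def Lr by (rule Bochner_Integration.integral_cong[OF refl]) (rule pw)
  also have "\<dots> = (ln (I r) / I r) * I r - (r / I r) * I'"
    using int1 int2 by (simp add: integral_diff I_def I'_def)
  also have "\<dots> = ln (I r) - r * I' / I r" using Ir by simp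
  finally have H: "cont_entropy M (\<lambda>x. g x powr r / Lp_norm M r g powr r) = ln (I r) - r * I' / I r" .
  show ?thesis using d2 unfolding H by (simp add: field_simps)
qed



definition rbox :: "nat \<Rightarrow> real \<Rightarrow> (nat \<Rightarrow> real) set" where
  "rbox n R = PiE {..<n} (\<lambda>_. {-R..R})"

lemma space_Rn: "space (Rn n) = PiE {..<n} (\<lambda>_. UNIV)"
  unfolding Rn_def by (simp add: space_PiM)

lemma box_sets[measurable]: "rbox n R \<in> sets (Rn n)"
  unfolding rbox_def Rn_def by (rule sets_PiM_I_finite) auto

lemma emeasure_box: assumes "0 \<le> R" shows "emeasure (Rn n) (rbox n R) = ennreal ((2 * R) ^ n)"
proof -
  interpret product_sigma_finite "\<lambda>_::nat. lborel" by standard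
  have "emeasure (Rn n) (rbox n R) = (\<Prod>i<n. emeasure lborel {-R..R})"
    unfolding rbox_def Rn_def by (rule emeasure_PiM) auto
  also have "\<dots> = (\<Prod>i<n. ennreal (2 * R))" using assms by simp
  also have "\<dots> = ennreal (2 * R) ^ n" by simp
  also have "\<dots> = ennreal ((2 * R) ^ n)" using assms by (simp only: ennreal_power)
  finally show ?thesis .
qed

lemma box_fin: "emeasure (Rn n) (rbox n R) < \<infinity>"
proof (cases "0 \<le> R")
  case True thus ?thesis by (simp add: emeasure_box)
next
  case False
  have "rbox n R \<subseteq> rbox n \<bar>R\<bar>" unfolding rbox_def by (rule PiE_mono) auto
  hence "emeasure (Rn n) (rbox n R) \<le> emeasure (Rn n) (rbox n \<bar>R\<bar>)" by (intro emeasure_mono) auto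
  thus ?thesis by (simp add: emeasure_box order.strict_trans1)
qed

lemma compact_coord_bound:
  fixes K :: "(nat \<Rightarrow> real) set"
  assumes "compact K"
  obtains R where "0 \<le> R" "\<And>x j. x \<in> K \<Longrightarrow> j < n \<Longrightarrow> \<bar>x j\<bar> \<le> R"
proof -
  have "\<exists>Rj. \<forall>x\<in>K. \<bar>x j\<bar> \<le> Rj" for j
  proof -
    have "compact ((\<lambda>x. x j) ` K)"
      by (rule compact_continuous_image[OF continuous_on_subset[OF continuous_on_product_coordinates] assms]) simp
    hence "bounded ((\<lambda>x. x j) ` K)" by (rule compact_imp_bounded)
    then obtain B where "\<forall>y\<in>(\<lambda>x. x j) ` K. norm y \<le> B" unfolding bounded_iff by blast
    thus ?thesis by auto
  qed
  then obtain Rf where Rf: "\<And>j x. x \<in> K \<Longrightarrow> \<bar>x j\<bar> \<le> Rf j" by metis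
  show ?thesis
  proof
    show "0 \<le> (\<Sum>j<n. \<bar>Rf j\<bar>)" by (simp add: sum_nonneg)
    fix x j assume "x \<in> K" "j < n"
    have "\<bar>x j\<bar> \<le> \<bar>Rf j\<bar>" using Rf[OF \<open>x \<in> K\<close>, of j] by simp
    also have "\<dots> \<le> (\<Sum>j<n. \<bar>Rf j\<bar>)" using \<open>j < n\<close> by (intro member_le_sum) auto
    finally show "\<bar>x j\<bar> \<le> (\<Sum>j<n. \<bar>Rf j\<bar>)" .
  qed
qed

lemma lin_map_box:
  assumes "x \<in> rbox n R" "0 \<le> R"
  shows "lin_map M m n x \<in> rbox m ((\<Sum>j<m. \<Sum>l<n. \<bar>M j l\<bar>) * R)"
proof -
  have "\<bar>\<Sum>l<n. M j l * x l\<bar> \<le> (\<Sum>j<m. \<Sum>l<n. \<bar>M j l\<bar>) * R" if j: "j < m" for j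
  proof -
    have "\<bar>\<Sum>l<n. M j l * x l\<bar> \<le> (\<Sum>l<n. \<bar>M j l * x l\<bar>)" by (rule sum_abs)
    also have "\<dots> \<le> (\<Sum>l<n. \<bar>M j l\<bar> * R)"
    proof (rule sum_mono)
      fix l assume "l \<in> {..<n}"
      hence "x l \<in> {-R..R}" using assms(1) unfolding rbox_def by (auto simp: PiE_iff)
      hence "\<bar>x l\<bar> \<le> R" by auto
      thus "\<bar>M j l * x l\<bar> \<le> \<bar>M j l\<bar> * R" by (simp add: abs_mult mult_left_mono)
    qed
    also have "\<dots> = (\<Sum>l<n. \<bar>M j l\<bar>) * R" by (simp add: sum_distrib_right)
    also have "\<dots> \<le> (\<Sum>j<m. \<Sum>l<n. \<bar>M j l\<bar>) * R"
      using j assms(2) by (intro mult_right_mono member_le_sum) (auto simp: sum_nonneg)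
    finally show ?thesis .
  qed
  hence "\<And>j. j < m \<Longrightarrow> (\<Sum>l<n. M j l * x l) \<in> {-((\<Sum>j<m. \<Sum>l<n. \<bar>M j l\<bar>) * R)..(\<Sum>j<m. \<Sum>l<n. \<bar>M j l\<bar>) * R}"
    by (simp add: abs_le_iff) (smt (verit))
  thus ?thesis unfolding lin_map_def rbox_def by (simp add: restrict_PiE_iff)
qed



lemma push_props:
  fixes M N :: "(nat \<Rightarrow> real) measure"
  assumes push: "is_pushforward M N Bf f g"
    and fm[measurable]: "f \<in> borel_measurable M" and fnn: "\<And>x. x \<in> space M \<Longrightarrow> 0 \<le> f x"
    and fi: "integrable M f" and fnz: "\<not> (AE x in M. f x = 0)"
    and S'[measurable]: "S' \<in> sets N"
    and maps: "\<And>x. x \<in> space M \<Longrightarrow> f x \<noteq> 0 \<Longrightarrow> Bf x \<in> S'"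
  shows "g \<in> borel_measurable N" "\<And>y. y \<in> space N \<Longrightarrow> 0 \<le> g y" "integrable N g"
    "AE y in N. g y \<noteq> 0 \<longrightarrow> y \<in> S'" "\<not> (AE y in N. g y = 0)"
proof -
  have gm[measurable]: "g \<in> borel_measurable N" and gnn: "\<And>y. y \<in> space N \<Longrightarrow> 0 \<le> g y"
    and eq: "\<And>F. F \<in> borel_measurable N \<Longrightarrow>
        (\<integral>\<^sup>+ y. ennreal (g y) * F y \<partial>N) = (\<integral>\<^sup>+ x. ennreal (f x) * F (Bf x) \<partial>M)"
    using push unfolding is_pushforward_def by auto
  show "g \<in> borel_measurable N" "\<And>y. y \<in> space N \<Longrightarrow> 0 \<le> g y" by (fact gm, fact gnn)
  have eq1: "(\<integral>\<^sup>+ y. ennreal (g y) \<partial>N) = (\<integral>\<^sup>+ x. ennreal (f x) \<partial>M)"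
    using eq[of "\<lambda>_. 1"] by simp
  have "(\<integral>\<^sup>+ x. ennreal (norm (f x)) \<partial>M) < \<infinity>" using fi unfolding integrable_iff_bounded by simp
  moreover have "(\<integral>\<^sup>+ x. ennreal (norm (f x)) \<partial>M) = (\<integral>\<^sup>+ x. ennreal (f x) \<partial>M)"
    by (rule nn_integral_cong) (simp add: fnn)
  ultimately have ffin: "(\<integral>\<^sup>+ x. ennreal (f x) \<partial>M) < \<infinity>" by simp
  show "integrable N g"
    by (rule integrableI_nonneg) (use gnn eq1 ffin in auto)
  have "(\<integral>\<^sup>+ y. ennreal (g y) * indicator (space N - S') y \<partial>N)
      = (\<integral>\<^sup>+ x. ennreal (f x) * indicator (space N - S') (Bf x) \<partial>M)"
    by (rule eq) measurable
  also have "\<dots> = (\<integral>\<^sup>+ x. 0 \<partial>M)"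
  proof (rule nn_integral_cong)
    fix x assume x: "x \<in> space M"
    show "ennreal (f x) * indicator (space N - S') (Bf x) = 0"
      using maps[OF x] by (cases "f x = 0") (auto simp: indicator_def)
  qed
  finally have "(\<integral>\<^sup>+ y. ennreal (g y) * indicator (space N - S') y \<partial>N) = 0" by simp
  hence "AE y in N. ennreal (g y) * indicator (space N - S') y = 0"
    by (subst (asm) nn_integral_0_iff_AE) measurable
  thus "AE y in N. g y \<noteq> 0 \<longrightarrow> y \<in> S'"
    using AE_space by eventually_elim (use gnn in \<open>auto simp: indicator_def\<close>)
  show "\<not> (AE y in N. g y = 0)"
  proof
    assume "AE y in N. g y = 0"
    hence "(\<integral>\<^sup>+ y. ennreal (g y) \<partial>N) = (\<integral>\<^sup>+ y. 0 \<partial>N)"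
      by (intro nn_integral_cong_AE) auto
    hence "(\<integral>\<^sup>+ x. ennreal (f x) \<partial>M) = 0" using eq1 by simp
    hence "AE x in M. ennreal (f x) = 0" by (subst (asm) nn_integral_0_iff_AE) measurable
    hence "AE x in M. f x = 0"
      using AE_space by eventually_elim (use fnn in \<open>fastforce simp: ennreal_eq_0_iff\<close>)
    thus False using fnz by simp
  qed
qed



lemma rbox_space: "rbox n R \<subseteq> space (Rn n)"
  using sets.sets_into_space[OF box_sets] .

lemma measure_box: assumes "0 \<le> R" shows "measure (Rn n) (rbox n R) = (2 * R) ^ n"
  using emeasure_box[OF assms, of n] assms unfolding measure_def by simp

lemma rbox_mono: "R \<le> R' \<Longrightarrow> rbox n R \<subseteq> rbox n R'"
  unfolding rbox_def by (rule PiE_mono) auto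

lemma BL_pos:
  fixes Bm :: "nat \<Rightarrow> nat \<Rightarrow> nat \<Rightarrow> real"
  shows "0 < BL d k dd (\<lambda>i. lin_map (Bm i) (dd i) d) c"
proof -
  define T where "T = (\<Sum>i<k. \<Sum>j<dd i. \<Sum>l<d. \<bar>Bm i j l\<bar>)"
  have T0: "0 \<le> T" unfolding T_def by (simp add: sum_nonneg)
  define \<epsilon> where "\<epsilon> = 1 / (1 + T)"
  have \<epsilon>: "0 < \<epsilon>" using T0 by (simp add: \<epsilon>_def)
  define E where "E = rbox d \<epsilon>"
  define g :: "nat \<Rightarrow> (nat \<Rightarrow> real) \<Rightarrow> real" where "g = (\<lambda>i. indicator (rbox (dd i) 1))"
  define P where "P = (\<Prod>i<k. (\<integral>y. g i y \<partial>Rn (dd i)) powr c i)"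
  have intg: "(\<integral>y. g i y \<partial>Rn (dd i)) = 2 ^ dd i" for i
  proof -
    have "(\<integral>y. g i y \<partial>Rn (dd i)) = measure (Rn (dd i)) (rbox (dd i) 1 \<inter> space (Rn (dd i)))"
      unfolding g_def by simp
    also have "\<dots> = measure (Rn (dd i)) (rbox (dd i) 1)" using rbox_space by (simp add: Int_absorb2)
    also have "\<dots> = 2 ^ dd i" by (simp add: measure_box)
    finally show ?thesis .
  qed
  have P: "0 < P" unfolding P_def intg by (intro prod_pos) simp
  have inE: "lin_map (Bm i) (dd i) d x \<in> rbox (dd i) 1" if "x \<in> E" "i < k" for x i
  proof -
    have Ti: "(\<Sum>j<dd i. \<Sum>l<d. \<bar>Bm i j l\<bar>) \<le> T"
      unfolding T_def using that(2) by (intro member_le_sum) (auto simp: sum_nonneg)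
    have "(\<Sum>j<dd i. \<Sum>l<d. \<bar>Bm i j l\<bar>) * \<epsilon> \<le> T * \<epsilon>" using Ti \<epsilon> by (simp add: mult_right_mono)
    also have "\<dots> \<le> 1" using T0 by (simp add: \<epsilon>_def field_simps)
    finally have le: "(\<Sum>j<dd i. \<Sum>l<d. \<bar>Bm i j l\<bar>) * \<epsilon> \<le> 1" .
    show ?thesis using lin_map_box[of x d \<epsilon> "Bm i" "dd i"] that(1) \<epsilon> rbox_mono[OF le]
      unfolding E_def by auto
  qed
  define e where "e = (2 * \<epsilon>) ^ d"
  have e: "0 < e" using \<epsilon> by (simp add: e_def)
  have geC: "ennreal (e / P) \<le> C" if C: "C \<in> {C. \<forall>g :: nat \<Rightarrow> (nat \<Rightarrow> real) \<Rightarrow> real.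
      (\<forall>i<k. integrable (Rn (dd i)) (g i) \<and> (\<forall>y\<in>space (Rn (dd i)). 0 \<le> g i y)) \<longrightarrow>
      (\<integral>\<^sup>+ x. ennreal (\<Prod>i<k. g i (lin_map (Bm i) (dd i) d x) powr c i) \<partial>Rn d)
        \<le> C * ennreal (\<Prod>i<k. (\<integral> y. g i y \<partial>Rn (dd i)) powr c i)}" for C
  proof -
    have "\<forall>i<k. integrable (Rn (dd i)) (g i) \<and> (\<forall>y\<in>space (Rn (dd i)). 0 \<le> g i y)"
      unfolding g_def using box_fin by auto
    hence le1: "(\<integral>\<^sup>+ x. ennreal (\<Prod>i<k. g i (lin_map (Bm i) (dd i) d x) powr c i) \<partial>Rn d) \<le> C * ennreal P"
      using C unfolding P_def by blast
    have "ennreal e = emeasure (Rn d) E" unfolding e_def E_def using \<epsilon> by (simp add: emeasure_box)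
    also have "\<dots> = (\<integral>\<^sup>+ x. indicator E x \<partial>Rn d)" unfolding E_def by simp
    also have "\<dots> \<le> (\<integral>\<^sup>+ x. ennreal (\<Prod>i<k. g i (lin_map (Bm i) (dd i) d x) powr c i) \<partial>Rn d)"
    proof (rule nn_integral_mono)
      fix x assume "x \<in> space (Rn d)"
      show "indicator E x \<le> ennreal (\<Prod>i<k. g i (lin_map (Bm i) (dd i) d x) powr c i)"
      proof (cases "x \<in> E")
        case True
        hence "(\<Prod>i<k. g i (lin_map (Bm i) (dd i) d x) powr c i) = (\<Prod>i<k. 1)"
          using inE by (intro prod.cong) (auto simp: g_def)
        thus ?thesis using True by simp
      qed simp
    qed
    also have "\<dots> \<le> C * ennreal P" by (fact le1)
    finally have eC: "ennreal e \<le> C * ennreal P" .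
    have "ennreal (e / P) = ennreal e * ennreal (1 / P)" using e P by (simp add: ennreal_mult[symmetric])
    also have "\<dots> \<le> C * ennreal P * ennreal (1 / P)" by (rule mult_right_mono[OF eC]) simp
    also have "\<dots> = C"
    proof -
      have "ennreal P * ennreal (1 / P) = ennreal (P * (1 / P))" by (rule ennreal_mult[symmetric]) (use P in auto)
      also have "\<dots> = 1" using P by simp
      finally have "ennreal P * ennreal (1 / P) = 1" .
      thus ?thesis by (simp only: mult.assoc mult_1_right)
    qed
    finally show ?thesis .
  qed
  have "ennreal (e / P) \<le> BL d k dd (\<lambda>i. lin_map (Bm i) (dd i) d) c"
    unfolding BL_def by (rule Inf_greatest) (rule geC)
  moreover have "0 < ennreal (e / P)" using e P by simp
  ultimately show ?thesis by (rule order.strict_trans2[rotated])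
qed



lemma pi_range:
  fixes a q :: real
  assumes "0 < a" "0 < q" "q < 1"
  shows "0 < 1 / (1 - a * (1 - 1 / q))" "1 / (1 - a * (1 - 1 / q)) < 1"
proof -
  have "1 < 1 / q" using assms by simp
  hence "a * (1 - 1 / q) < 0" using assms(1) by (intro mult_pos_neg) auto
  hence "1 < 1 - a * (1 - 1 / q)" by simp
  thus "0 < 1 / (1 - a * (1 - 1 / q))" "1 / (1 - a * (1 - 1 / q)) < 1" by auto
qed

lemma pos_Y:
  fixes a q :: real
  assumes "0 < a" "0 < q" "q < 1"
  shows "0 < a + (1 - a) * q"
proof -
  have "0 < a * (1 - q)" using assms by simp
  moreover have "a + (1 - a) * q = a * (1 - q) + q" by (simp add: algebra_simps)
  ultimately show ?thesis using assms by linarith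
qed

lemma pi_alt:
  fixes a q :: real
  assumes "0 < a" "0 < q" "q < 1"
  shows "1 / (1 - a * (1 - 1 / q)) = q / (a + (1 - a) * q)"
proof -
  have "1 - a * (1 - 1 / q) = (a + (1 - a) * q) / q" using assms by (simp add: field_simps)
  thus ?thesis by simp
qed

lemma pi_deriv:
  fixes a p :: real
  assumes "0 < a" "0 < p" "p < 1"
  shows "((\<lambda>q. 1 / (1 - a * (1 - 1 / q))) has_real_derivative
           a * (1 / (1 - a * (1 - 1 / p)))\<^sup>2 / p\<^sup>2) (at p)"
proof -
  have Y: "0 < a + (1 - a) * p" by (rule pos_Y[OF assms])
  have d: "((\<lambda>q. q / (a + (1 - a) * q)) has_real_derivative a / (a + (1 - a) * p)\<^sup>2) (at p)"
    using Y by (auto intro!: derivative_eq_intros simp: field_simps power2_eq_square)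
  have d2: "((\<lambda>q. 1 / (1 - a * (1 - 1 / q))) has_real_derivative a / (a + (1 - a) * p)\<^sup>2) (at p)"
    by (rule has_field_derivative_transform_within_open[OF d, of "{0<..<1}"])
       (use assms pi_alt[OF assms(1)] in auto)
  have "a * (1 / (1 - a * (1 - 1 / p)))\<^sup>2 / p\<^sup>2 = a / (a + (1 - a) * p)\<^sup>2"
    unfolding pi_alt[OF assms] power_divide using assms Y by simp
  thus ?thesis using d2 by simp
qed

lemma ln3: fixes X Y Z :: real assumes "0 < X" "0 < Y" "0 < Z"
  shows "ln (X / (Y * Z)) = ln X - ln Y - ln Z"
  using assms by (simp add: ln_div ln_mult)

theorem proposition5p2:
  fixes d k :: nat and dd :: "nat \<Rightarrow> nat"
    and Bm :: "nat \<Rightarrow> nat \<Rightarrow> nat \<Rightarrow> real"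
    and c \<theta> :: "nat \<Rightarrow> real"
    and f :: "(nat \<Rightarrow> real) \<Rightarrow> real"
    and fi :: "nat \<Rightarrow> (nat \<Rightarrow> real) \<Rightarrow> real"
    and pi :: "real \<Rightarrow> nat \<Rightarrow> real"
    and \<Lambda> :: "real \<Rightarrow> real"
    and p :: real
  defines "B \<equiv> (\<lambda>i. lin_map (Bm i) (dd i) d)"
  assumes surj: "\<And>i. i < k \<Longrightarrow> B i ` space (Rn d) = space (Rn (dd i))"
    and c_pos: "\<And>i. i < k \<Longrightarrow> 0 < c i"
    and \<theta>_pos: "\<And>i. i < k \<Longrightarrow> 0 < \<theta> i"
    and \<theta>_sum: "(\<Sum>i<k. \<theta> i) = 1"
    and BL_fin: "BL d k dd B c < \<infinity>"
    and f_meas: "f \<in> borel_measurable (Rn d)"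
    and f_nonneg: "\<And>x. x \<in> space (Rn d) \<Longrightarrow> 0 \<le> f x"
    and f_bdd: "\<exists>M. \<forall>x\<in>space (Rn d). f x \<le> M"
    and f_supp: "\<exists>K. compact K \<and> (\<forall>x\<in>space (Rn d). f x \<noteq> 0 \<longrightarrow> x \<in> K)"
    and f_nonzero: "\<not> (AE x in Rn d. f x = 0)"
    and fi_push: "\<And>i. i < k \<Longrightarrow> is_pushforward (Rn d) (Rn (dd i)) (B i) f (fi i)"
    and pi_def: "\<And>q i. pi q i = 1 / (1 - (c i / \<theta> i) * (1 - 1 / q))"
    and \<Lambda>_def: "\<And>q. \<Lambda> q = Lp_norm (Rn d) q f /
         (enn2real (BL d k dd B c) powr (1 / q - 1) *
          (\<Prod>i<k. Lp_norm (Rn (dd i)) (pi q i) (fi i) powr \<theta> i))"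
    and p: "0 < p" "p < 1"
  shows "((\<lambda>q. ln (\<Lambda> q)) has_real_derivative
           (ln (enn2real (BL d k dd B c))
            - cont_entropy (Rn d) (\<lambda>x. f x powr p / Lp_norm (Rn d) p f powr p)
            + (\<Sum>i<k. c i * cont_entropy (Rn (dd i))
                 (\<lambda>y. fi i y powr pi p i / Lp_norm (Rn (dd i)) (pi p i) (fi i) powr pi p i)))
           / p\<^sup>2) (at p)"
proof -
  define BLr where "BLr = enn2real (BL d k dd B c)"
  have BLp: "0 < BLr"
    using BL_pos[of d k dd Bm c] BL_fin unfolding B_def BLr_def by (simp add: enn2real_positive_iff)
  obtain K where K: "compact K" "\<forall>x\<in>space (Rn d). f x \<noteq> 0 \<longrightarrow> x \<in> K" using f_supp by blast
  obtain R where R: "0 \<le> R" "\<And>x j. x \<in> K \<Longrightarrow> j < d \<Longrightarrow> \<bar>x j\<bar> \<le> R"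
    using compact_coord_bound[OF K(1), of d] by metis
  have fS: "x \<in> rbox d R" if x: "x \<in> space (Rn d)" "f x \<noteq> 0" for x
  proof -
    have "x \<in> K" using K(2) x by blast
    moreover have "x \<in> extensional {..<d}" using x(1) unfolding space_Rn by (simp add: PiE_iff)
    moreover have "\<forall>j<d. x j \<in> {-R..R}"
    proof (intro allI impI)
      fix j assume "j < d"
      hence "\<bar>x j\<bar> \<le> R" using R(2) \<open>x \<in> K\<close> by blast
      thus "x j \<in> {-R..R}" by auto
    qed
    ultimately show ?thesis unfolding rbox_def by (auto simp: PiE_iff)
  qed
  obtain Mb where Mb: "\<forall>x\<in>space (Rn d). f x \<le> Mb" using f_bdd by blast
  have f_int: "integrable (Rn d) f"
  proof (rule Bochner_Integration.integrable_bound[of _ "\<lambda>x. \<bar>Mb\<bar> * indicator (rbox d R) x"])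
    show "integrable (Rn d) (\<lambda>x. \<bar>Mb\<bar> * indicator (rbox d R) x)" using box_fin by auto
    show "f \<in> borel_measurable (Rn d)" by (fact f_meas)
    show "AE x in Rn d. norm (f x) \<le> norm (\<bar>Mb\<bar> * indicator (rbox d R) x)"
    proof (rule AE_I2)
      fix x assume x: "x \<in> space (Rn d)"
      show "norm (f x) \<le> norm (\<bar>Mb\<bar> * indicator (rbox d R) x)"
      proof (cases "f x = 0")
        case False
        hence "x \<in> rbox d R" using fS x by blast
        thus ?thesis using Mb x f_nonneg[OF x] by auto
      qed simp
    qed
  qed
  have f_suppAE: "AE x in Rn d. f x \<noteq> 0 \<longrightarrow> x \<in> rbox d R" by (rule AE_I2) (use fS in auto)
  define Ri where "Ri = (\<lambda>i. (\<Sum>j<dd i. \<Sum>l<d. \<bar>Bm i j l\<bar>) * R)"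
  have maps: "B i x \<in> rbox (dd i) (Ri i)" if "x \<in> space (Rn d)" "f x \<noteq> 0" for i x
    using lin_map_box[OF fS[OF that] R(1)] unfolding B_def Ri_def by auto
  have fiP: "fi i \<in> borel_measurable (Rn (dd i))" "\<And>y. y \<in> space (Rn (dd i)) \<Longrightarrow> 0 \<le> fi i y"
    "integrable (Rn (dd i)) (fi i)" "AE y in Rn (dd i). fi i y \<noteq> 0 \<longrightarrow> y \<in> rbox (dd i) (Ri i)"
    "\<not> (AE y in Rn (dd i). fi i y = 0)" if i: "i < k" for i
    using push_props[OF fi_push[OF i] f_meas f_nonneg f_int f_nonzero box_sets maps] by auto
  define a where "a = (\<lambda>i. c i / \<theta> i)"
  have a: "0 < a i" if "i < k" for i using c_pos[OF that] \<theta>_pos[OF that] by (simp add: a_def)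
  have pi_eq: "pi q i = 1 / (1 - a i * (1 - 1 / q))" for q i by (simp add: pi_def a_def)
  have pir: "0 < pi q i" "pi q i < 1" if "i < k" "0 < q" "q < 1" for i q
    unfolding pi_eq using pi_range[OF a[OF that(1)] that(2,3)] by auto
  have Lpf_pos: "0 < Lp_norm (Rn d) q f" if "0 < q" "q < 1" for q
  proof -
    have "0 < (\<integral>x. f x powr q \<partial>Rn d)"
      by (rule Lp_int_pos[OF f_meas f_nonneg f_int box_sets box_fin f_suppAE f_nonzero]) (use that in auto)
    thus ?thesis using Lp_norm_eq[of "Rn d" f q] f_nonneg by simp
  qed
  have Lpfi_pos: "0 < Lp_norm (Rn (dd i)) q (fi i)" if "i < k" "0 < q" "q < 1" for i q
  proof -
    have "0 < (\<integral>x. fi i x powr q \<partial>Rn (dd i))"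
      by (rule Lp_int_pos[OF fiP(1,2,3)[OF that(1)] box_sets box_fin fiP(4,5)[OF that(1)]]) (use that in auto)
    thus ?thesis using Lp_norm_eq[of "Rn (dd i)" "fi i" q] fiP(2)[OF that(1)] by simp
  qed
  define Hf where "Hf = cont_entropy (Rn d) (\<lambda>x. f x powr p / Lp_norm (Rn d) p f powr p)"
  define Hi where "Hi = (\<lambda>i. cont_entropy (Rn (dd i))
                 (\<lambda>y. fi i y powr pi p i / Lp_norm (Rn (dd i)) (pi p i) (fi i) powr pi p i))"
  have dF: "((\<lambda>q. ln (Lp_norm (Rn d) q f)) has_real_derivative (- Hf / p\<^sup>2)) (at p)"
    unfolding Hf_def by (rule deriv_ln_Lp[OF f_meas f_nonneg f_int box_sets box_fin f_suppAE f_nonzero p])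
  have dFi: "((\<lambda>q. ln (Lp_norm (Rn (dd i)) q (fi i))) has_real_derivative (- Hi i / (pi p i)\<^sup>2)) (at (pi p i))"
    if i: "i < k" for i
    unfolding Hi_def
    by (rule deriv_ln_Lp[OF fiP(1,2,3)[OF i] box_sets box_fin fiP(4,5)[OF i] pir[OF i p]])
  have dpi: "((\<lambda>q. pi q i) has_real_derivative a i * (pi p i)\<^sup>2 / p\<^sup>2) (at p)" if i: "i < k" for i
    unfolding pi_eq by (rule pi_deriv[OF a[OF i] p])
  have dterm: "((\<lambda>q. \<theta> i * ln (Lp_norm (Rn (dd i)) (pi q i) (fi i))) has_real_derivative
       \<theta> i * ((- Hi i / (pi p i)\<^sup>2) * (a i * (pi p i)\<^sup>2 / p\<^sup>2))) (at p)" if i: "i < k" for i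
    by (rule DERIV_cmult, rule DERIV_chain2[OF dFi[OF i] dpi[OF i]])
  have dBL: "((\<lambda>q. (1 / q - 1) * ln BLr) has_real_derivative (- ln BLr / p\<^sup>2)) (at p)"
    using p by (auto intro!: derivative_eq_intros simp: power2_eq_square field_simps)
  have dAll: "((\<lambda>q. ln (Lp_norm (Rn d) q f) - (1 / q - 1) * ln BLr
        - (\<Sum>i<k. \<theta> i * ln (Lp_norm (Rn (dd i)) (pi q i) (fi i)))) has_real_derivative
       (- Hf / p\<^sup>2 - (- ln BLr / p\<^sup>2) - (\<Sum>i<k. \<theta> i * ((- Hi i / (pi p i)\<^sup>2) * (a i * (pi p i)\<^sup>2 / p\<^sup>2))))) (at p)"
    by (rule DERIV_diff[OF DERIV_diff[OF dF dBL] DERIV_sum]) (use dterm in auto)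
  have eqf: "ln (\<Lambda> q) = ln (Lp_norm (Rn d) q f) - (1 / q - 1) * ln BLr
        - (\<Sum>i<k. \<theta> i * ln (Lp_norm (Rn (dd i)) (pi q i) (fi i)))" if q: "q \<in> {0<..<1}" for q
  proof -
    have q0: "0 < q" "q < 1" using q by auto
    have pos: "0 < Lp_norm (Rn (dd i)) (pi q i) (fi i)" if "i \<in> {..<k}" for i
      using Lpfi_pos[of i "pi q i"] pir[of i q] that q0 by auto
    have pos2: "0 < (\<Prod>i<k. Lp_norm (Rn (dd i)) (pi q i) (fi i) powr \<theta> i)"
    proof (rule prod_pos)
      fix i assume "i \<in> {..<k}"
      from pos[OF this] show "0 < Lp_norm (Rn (dd i)) (pi q i) (fi i) powr \<theta> i" by simp
    qed
    have "ln (\<Lambda> q) = ln (Lp_norm (Rn d) q f) - ln (BLr powr (1 / q - 1))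
        - ln (\<Prod>i<k. Lp_norm (Rn (dd i)) (pi q i) (fi i) powr \<theta> i)"
      unfolding \<Lambda>_def BLr_def[symmetric]
      by (rule ln3[OF Lpf_pos[OF q0] _ pos2]) (use BLp in simp)
    also have "ln (\<Prod>i<k. Lp_norm (Rn (dd i)) (pi q i) (fi i) powr \<theta> i)
        = (\<Sum>i<k. \<theta> i * ln (Lp_norm (Rn (dd i)) (pi q i) (fi i)))"
    proof -
      have "ln (\<Prod>i<k. Lp_norm (Rn (dd i)) (pi q i) (fi i) powr \<theta> i)
          = (\<Sum>i<k. ln (Lp_norm (Rn (dd i)) (pi q i) (fi i) powr \<theta> i))"
      proof (rule ln_prod)
        fix i assume "i \<in> {..<k}"
        from pos[OF this] show "Lp_norm (Rn (dd i)) (pi q i) (fi i) powr \<theta> i \<noteq> 0" by simp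
      qed simp
      also have "\<dots> = (\<Sum>i<k. \<theta> i * ln (Lp_norm (Rn (dd i)) (pi q i) (fi i)))"
      proof (rule sum.cong)
        fix i assume "i \<in> {..<k}"
        from pos[OF this] show "ln (Lp_norm (Rn (dd i)) (pi q i) (fi i) powr \<theta> i) = \<theta> i * ln (Lp_norm (Rn (dd i)) (pi q i) (fi i))"
          by (simp add: ln_powr)
      qed simp
      finally show ?thesis .
    qed
    finally show ?thesis using BLp by (simp add: ln_powr)
  qed
  have dAll2: "((\<lambda>q. ln (\<Lambda> q)) has_real_derivative
       (- Hf / p\<^sup>2 - (- ln BLr / p\<^sup>2) - (\<Sum>i<k. \<theta> i * ((- Hi i / (pi p i)\<^sup>2) * (a i * (pi p i)\<^sup>2 / p\<^sup>2))))) (at p)"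
    by (rule has_field_derivative_transform_within_open[OF dAll, of "{0<..<1}"]) (use p eqf in auto)
  have trm: "\<theta> i * ((- Hi i / (pi p i)\<^sup>2) * (a i * (pi p i)\<^sup>2 / p\<^sup>2)) = - (c i * Hi i) / p\<^sup>2"
    if i: "i \<in> {..<k}" for i
  proof -
    have "\<theta> i \<noteq> 0" "pi p i \<noteq> 0" using \<theta>_pos[of i] pir[of i p] i p by auto
    thus ?thesis by (simp add: a_def field_simps)
  qed
  have "(\<Sum>i<k. \<theta> i * ((- Hi i / (pi p i)\<^sup>2) * (a i * (pi p i)\<^sup>2 / p\<^sup>2))) = (\<Sum>i<k. - (c i * Hi i) / p\<^sup>2)"
    by (rule sum.cong[OF refl trm])
  also have "\<dots> = - (\<Sum>i<k. c i * Hi i) / p\<^sup>2" by (simp add: sum_negf sum_divide_distrib)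
  finally have S: "(\<Sum>i<k. \<theta> i * ((- Hi i / (pi p i)\<^sup>2) * (a i * (pi p i)\<^sup>2 / p\<^sup>2))) = - (\<Sum>i<k. c i * Hi i) / p\<^sup>2" .
  have val: "- Hf / p\<^sup>2 - (- ln BLr / p\<^sup>2) - (\<Sum>i<k. \<theta> i * ((- Hi i / (pi p i)\<^sup>2) * (a i * (pi p i)\<^sup>2 / p\<^sup>2)))
      = (ln BLr - Hf + (\<Sum>i<k. c i * Hi i)) / p\<^sup>2"
    unfolding S by (simp add: diff_divide_distrib add_divide_distrib)
  have "((\<lambda>q. ln (\<Lambda> q)) has_real_derivative (ln BLr - Hf + (\<Sum>i<k. c i * Hi i)) / p\<^sup>2) (at p)"
    by (rule DERIV_cong[OF dAll2 val])
  thus ?thesis unfolding Hf_def Hi_def BLr_def .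
qed


end
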